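(* For each $n\ge1$ let $x_1,\dots,x_n\in\mathbb{R}^p$, induced points $u_1,\dots,u_s$ chosen from them, $\epsilon>0$ and a cutoff $\eta_{1,n}>0$, and define $\bar K,\bar Z,\bar\Lambda,\tilde K,\tilde Z,\tilde\Lambda$ as in the context. Suppose there is a constant $c_1\in(0,1)$ such that $\bar K_{i\cdot},\bar K_{\cdot i},\tilde K_{i\cdot},\tilde K_{\cdot i}\ge c_1n$ for all $1\le i\le n$ and all $n\ge1$. Then there exists a constant $C_1$ such that $$\|\bar Z\bar\Lambda^{-1}\bar Z^\top-\tilde Z\tilde\Lambda^{-1}\tilde Z^\top\|_2\le C_1\big(\exp(-\eta_{1,n}^2/(4\epsilon^2))+\eta_{2,n}/\epsilon\big),$$ where $\eta_{2,n}=\sup_{1\le i\le n}\|x_i-u_{\tau(i)}\|$.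
   Context: $\|\cdot\|_2$ is the spectral norm; $B_{i\cdot}=\sum_jB_{ij}$, $B_{\cdot j}=\sum_iB_{ij}$. Let $k(x,x')=\exp(-\|x-x'\|^2/(4\epsilon^2))$ and $k_{\eta_{1,n}}(x,x')=k(x,x')\mathbf 1_{\{\|x-x'\|<\eta_{1,n}\}}$. One-step: $\bar K_{ij}=k(x_i,x_j)$, $\bar A_{ij}=k(x_i,x_j)/(\bar K_{i\cdot}\bar K_{\cdot j})$, $\bar Z_{ij}=\bar A_{ij}/\bar A_{i\cdot}$, $\bar\Lambda=\mathrm{diag}(\bar Z_{\cdot i})$. For each $i$, $u_{\tau(i)}$ is the induced point nearest to $x_i$. $\tilde K_{ij}=k_{\eta_{1,n}}(x_i,u_{\tau(j)})$, $\tilde A_{ij}=\tilde K_{ij}/(\tilde K_{i\cdot}\tilde K_{\cdot j})$, $\tilde Z_{ij}=\tilde A_{ij}/\tilde A_{i\cdot}$, $\tilde\Lambda=\mathrm{diag}(\tilde Z_{\cdot i})$, all for $1\le i,j\le n$. *)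

theory Defs
  imports "HOL-Analysis.Analysis"
begin

text \<open>Matrices of size n x n are represented as functions nat => nat => real,
  with indices 0..n-1 (the paper's indices 1..n shifted by one).\<close>

definition gauss_kernel :: "real \<Rightarrow> 'a::real_normed_vector \<Rightarrow> 'a \<Rightarrow> real" where
  "gauss_kernel \<epsilon> x y = exp (- (norm (x - y))\<^sup>2 / (4 * \<epsilon>\<^sup>2))"

definition trunc_kernel :: "real \<Rightarrow> real \<Rightarrow> 'a::real_normed_vector \<Rightarrow> 'a \<Rightarrow> real" where
  "trunc_kernel \<epsilon> \<eta> x y = (if norm (x - y) < \<eta> then gauss_kernel \<epsilon> x y else 0)"

definition row_sum :: "nat \<Rightarrow> (nat \<Rightarrow> nat \<Rightarrow> real) \<Rightarrow> nat \<Rightarrow> real" where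
  "row_sum n B i = (\<Sum>j<n. B i j)"

definition col_sum :: "nat \<Rightarrow> (nat \<Rightarrow> nat \<Rightarrow> real) \<Rightarrow> nat \<Rightarrow> real" where
  "col_sum n B j = (\<Sum>i<n. B i j)"

definition norm_A :: "nat \<Rightarrow> (nat \<Rightarrow> nat \<Rightarrow> real) \<Rightarrow> nat \<Rightarrow> nat \<Rightarrow> real" where
  "norm_A n K i j = K i j / (row_sum n K i * col_sum n K j)"

definition norm_Z :: "nat \<Rightarrow> (nat \<Rightarrow> nat \<Rightarrow> real) \<Rightarrow> nat \<Rightarrow> nat \<Rightarrow> real" where
  "norm_Z n K i j = norm_A n K i j / row_sum n (norm_A n K) i"

text \<open>Z Lambda^{-1} Z^T with Lambda = diag(Z_{.j})\<close>
definition ZLZt :: "nat \<Rightarrow> (nat \<Rightarrow> nat \<Rightarrow> real) \<Rightarrow> nat \<Rightarrow> nat \<Rightarrow> real" where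
  "ZLZt n Z i k = (\<Sum>j<n. Z i j * (1 / col_sum n Z j) * Z k j)"

definition spec_norm :: "nat \<Rightarrow> (nat \<Rightarrow> nat \<Rightarrow> real) \<Rightarrow> real" where
  "spec_norm n M = (SUP v \<in> {v :: nat \<Rightarrow> real. L2_set v {..<n} \<le> 1}.
       L2_set (\<lambda>i. \<Sum>j<n. M i j * v j) {..<n})"

end

theory Submission
  imports Defs
begin


lemma exp_sq_lip: fixes a b :: real shows "\<bar>exp (-(a\<^sup>2)) - exp (-(b\<^sup>2))\<bar> \<le> \<bar>a - b\<bar>"
proof -
  have key: "\<bar>exp (-(a\<^sup>2)) - exp (-(b\<^sup>2))\<bar> \<le> \<bar>a - b\<bar>" if "a < b" for a b :: real
  proof -
    have "\<And>x. a \<le> x \<Longrightarrow> x \<le> b \<Longrightarrow> DERIV (\<lambda>t. exp (-(t\<^sup>2))) x :> exp (-(x\<^sup>2)) * (-(2 * x))"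
      by (auto intro!: derivative_eq_intros)
    from MVT2[OF that this] obtain z where z: "exp (-(b\<^sup>2)) - exp (-(a\<^sup>2)) = (b - a) * (exp (-(z\<^sup>2)) * (-(2 * z)))"
      by blast
    have "\<bar>2 * z\<bar> \<le> 1 + z\<^sup>2"
      using zero_le_power2[of "\<bar>z\<bar> - 1"] unfolding power2_diff power2_abs by (simp add: abs_mult)
    also have "... \<le> exp (z\<^sup>2)" using exp_ge_add_one_self[of "z\<^sup>2"] by simp
    finally have "\<bar>exp (-(z\<^sup>2)) * (-(2 * z))\<bar> \<le> 1"
      by (simp add: abs_mult exp_minus field_simps)
    then have "\<bar>(b - a) * (exp (-(z\<^sup>2)) * (-(2 * z)))\<bar> \<le> \<bar>b - a\<bar>"
      by (metis abs_ge_zero abs_mult mult.right_neutral mult_left_mono)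
    then show ?thesis using z by (simp add: abs_minus_commute)
  qed
  show ?thesis
  proof (cases a b rule: linorder_cases)
    case less then show ?thesis by (rule key)
  next
    case equal then show ?thesis by simp
  next
    case greater then show ?thesis using key[OF greater] by (simp add: abs_minus_commute)
  qed
qed

lemma gauss_eq: assumes "\<epsilon> > 0" shows "gauss_kernel \<epsilon> x y = exp (-((norm (x - y) / (2*\<epsilon>))\<^sup>2))"
  using assms unfolding gauss_kernel_def by (simp add: power_divide power_mult_distrib)

lemma gauss_lip: assumes "\<epsilon> > 0"
  shows "\<bar>gauss_kernel \<epsilon> x y - gauss_kernel \<epsilon> x z\<bar> \<le> norm (y - z) / \<epsilon>"
proof -
  have "\<bar>gauss_kernel \<epsilon> x y - gauss_kernel \<epsilon> x z\<bar> \<le> \<bar>norm (x - y) / (2*\<epsilon>) - norm (x - z) / (2*\<epsilon>)\<bar>"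
    unfolding gauss_eq[OF assms] by (rule exp_sq_lip)
  also have "... = \<bar>norm (x - y) - norm (x - z)\<bar> / (2*\<epsilon>)"
    using assms by (simp add: diff_divide_distrib[symmetric])
  also have "... \<le> norm (y - z) / (2*\<epsilon>)"
    using assms norm_triangle_ineq3[of "x - y" "x - z"] by (intro divide_right_mono) (auto simp: norm_minus_commute)
  also have "... \<le> norm (y - z) / \<epsilon>" using assms by (simp add: frac_le)
  finally show ?thesis .
qed

lemma gauss_bounds: "0 \<le> gauss_kernel \<epsilon> x y" "gauss_kernel \<epsilon> x y \<le> 1"
  unfolding gauss_kernel_def by auto

lemma trunc_bounds: "0 \<le> trunc_kernel \<epsilon> \<eta> x y" "trunc_kernel \<epsilon> \<eta> x y \<le> 1"
  unfolding trunc_kernel_def using gauss_bounds by auto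

lemma kernel_diff:
  assumes "\<epsilon> > 0" "\<eta> > 0" "norm (y - z) \<le> d"
  shows "\<bar>gauss_kernel \<epsilon> x y - trunc_kernel \<epsilon> \<eta> x z\<bar> \<le> exp (- \<eta>\<^sup>2 / (4 * \<epsilon>\<^sup>2)) + d / \<epsilon>"
proof -
  have L: "\<bar>gauss_kernel \<epsilon> x y - gauss_kernel \<epsilon> x z\<bar> \<le> d / \<epsilon>"
    by (rule order_trans[OF gauss_lip[OF assms(1)] divide_right_mono[OF assms(3)]]) (use assms(1) in simp)
  show ?thesis
  proof (cases "norm (x - z) < \<eta>")
    case True
    have e: "0 < exp (- \<eta>\<^sup>2 / (4 * \<epsilon>\<^sup>2))" by simp
    have t: "trunc_kernel \<epsilon> \<eta> x z = gauss_kernel \<epsilon> x z" using True by (simp add: trunc_kernel_def)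
    show ?thesis unfolding t using L e by linarith
  next
    case False
    have "gauss_kernel \<epsilon> x z \<le> exp (- \<eta>\<^sup>2 / (4 * \<epsilon>\<^sup>2))"
      unfolding gauss_kernel_def using False assms
      by (auto intro!: divide_right_mono power_mono)
    then show ?thesis using False L gauss_bounds[of \<epsilon> x y] by (simp add: trunc_kernel_def)
  qed
qed



lemma sum_pert:
  fixes f g :: "nat \<Rightarrow> real"
  assumes "\<And>j. j < n \<Longrightarrow> \<bar>f j - g j\<bar> \<le> \<alpha>"
  shows "\<bar>(\<Sum>j<n. f j) - (\<Sum>j<n. g j)\<bar> \<le> real n * \<alpha>"
proof -
  have "\<bar>(\<Sum>j<n. f j) - (\<Sum>j<n. g j)\<bar> = \<bar>\<Sum>j<n. f j - g j\<bar>" by (simp add: sum_subtractf)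
  also have "... \<le> (\<Sum>j<n. \<bar>f j - g j\<bar>)" by (rule sum_abs)
  also have "... \<le> real (card {..<n}) * \<alpha>" by (rule sum_bounded_above) (use assms in auto)
  finally show ?thesis by simp
qed

lemma mul_pert:
  fixes x y x' y' :: real
  assumes "\<bar>x\<bar> \<le> X" "\<bar>y'\<bar> \<le> Y" "\<bar>x - x'\<bar> \<le> \<alpha>" "\<bar>y - y'\<bar> \<le> \<beta>"
  shows "\<bar>x * y - x' * y'\<bar> \<le> X * \<beta> + \<alpha> * Y"
proof -
  have e: "x * y - x' * y' = x * (y - y') + (x - x') * y'" by (simp add: algebra_simps)
  have "\<bar>x * (y - y')\<bar> \<le> X * \<beta>" unfolding abs_mult
    by (rule mult_mono) (use assms in auto)
  moreover have "\<bar>(x - x') * y'\<bar> \<le> \<alpha> * Y" unfolding abs_mult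
    by (rule mult_mono) (use assms in auto)
  ultimately show ?thesis unfolding e
    using abs_triangle_ineq[of "x * (y - y')" "(x - x') * y'"] by linarith
qed

lemma div_pert:
  fixes x y x' y' :: real
  assumes m: "0 < m" "m \<le> y" "m \<le> y'" and "\<bar>x\<bar> \<le> X" "\<bar>x - x'\<bar> \<le> \<alpha>" "\<bar>y - y'\<bar> \<le> \<beta>"
  shows "\<bar>x / y - x' / y'\<bar> \<le> \<alpha> / m + X * \<beta> / m\<^sup>2"
proof -
  have y: "y > 0" "y' > 0" using m by auto
  have e: "x / y - x' / y' = (x - x') / y' + x * (y' - y) / (y * y')"
    using y by (simp add: field_simps)
  have 1: "\<bar>(x - x') / y'\<bar> \<le> \<alpha> / m"
    unfolding abs_divide using y m assms(5)
    by (intro frac_le) auto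
  have "\<bar>x * (y' - y)\<bar> \<le> X * \<beta>" unfolding abs_mult
    by (rule mult_mono) (use assms in \<open>auto simp: abs_minus_commute\<close>)
  moreover have "m\<^sup>2 \<le> y * y'" unfolding power2_eq_square using m by (intro mult_mono) auto
  ultimately have 2: "\<bar>x * (y' - y) / (y * y')\<bar> \<le> X * \<beta> / m\<^sup>2"
    unfolding abs_divide using y m
    by (intro frac_le) (auto intro: order_trans[OF abs_ge_zero])
  show ?thesis unfolding e
    using abs_triangle_ineq[of "(x - x') / y'" "x * (y' - y) / (y * y')"] 1 2 by linarith
qed

lemma mat_bounds:
  fixes K :: "nat \<Rightarrow> nat \<Rightarrow> real"
  assumes n: "n \<ge> 1" and c: "0 < c" "c \<le> 1"
    and Kb: "\<And>i j. i < n \<Longrightarrow> j < n \<Longrightarrow> 0 \<le> K i j \<and> K i j \<le> 1"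
    and R: "\<And>i. i < n \<Longrightarrow> row_sum n K i \<ge> c * n"
    and C: "\<And>i. i < n \<Longrightarrow> col_sum n K i \<ge> c * n"
  shows "i < n \<Longrightarrow> row_sum n K i \<le> n"
    and "j < n \<Longrightarrow> col_sum n K j \<le> n"
    and "i < n \<Longrightarrow> j < n \<Longrightarrow> 0 \<le> norm_A n K i j \<and> norm_A n K i j \<le> 1 / (c\<^sup>2 * (real n)\<^sup>2)"
    and "i < n \<Longrightarrow> row_sum n (norm_A n K) i \<ge> 1 / n"
    and "i < n \<Longrightarrow> j < n \<Longrightarrow> 0 \<le> norm_Z n K i j \<and> norm_Z n K i j \<le> 1 / (c\<^sup>2 * n)"
    and "j < n \<Longrightarrow> col_sum n (norm_Z n K) j \<ge> c\<^sup>2"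
    and "i < n \<Longrightarrow> j < n \<Longrightarrow> c\<^sup>2 * (real n)\<^sup>2 \<le> row_sum n K i * col_sum n K j"
proof -
  have N: "real n > 0" using n by simp
  show Ru: "row_sum n K i \<le> n" if "i < n" for i
  proof -
    have "row_sum n K i \<le> real (card {..<n}) * 1" unfolding row_sum_def
      by (rule sum_bounded_above) (use Kb that in auto)
    then show ?thesis by simp
  qed
  show Cu: "col_sum n K j \<le> n" if "j < n" for j
  proof -
    have "col_sum n K j \<le> real (card {..<n}) * 1" unfolding col_sum_def
      by (rule sum_bounded_above) (use Kb that in auto)
    then show ?thesis by simp
  qed
  have Rp: "row_sum n K i > 0" if "i < n" for i using R[OF that] mult_pos_pos[OF c(1) N] by linarith
  have Cp: "col_sum n K i > 0" if "i < n" for i using C[OF that] mult_pos_pos[OF c(1) N] by linarith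
  show RC: "c\<^sup>2 * (real n)\<^sup>2 \<le> row_sum n K i * col_sum n K j" if "i < n" "j < n" for i j
  proof -
    have "(c * n) * (c * n) \<le> row_sum n K i * col_sum n K j"
      using R[OF that(1)] C[OF that(2)] Rp[OF that(1)] Cp[OF that(2)] c N by (intro mult_mono) auto
    then show ?thesis by (simp add: power2_eq_square algebra_simps)
  qed
  show Ab: "0 \<le> norm_A n K i j \<and> norm_A n K i j \<le> 1 / (c\<^sup>2 * (real n)\<^sup>2)" if "i < n" "j < n" for i j
  proof
    show "0 \<le> norm_A n K i j" unfolding norm_A_def using Kb[OF that] Rp[OF that(1)] Cp[OF that(2)] by simp
    have "norm_A n K i j \<le> 1 / (row_sum n K i * col_sum n K j)"
      unfolding norm_A_def using Kb[OF that] Rp[OF that(1)] Cp[OF that(2)]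
      by (intro divide_right_mono) auto
    also have "... \<le> 1 / (c\<^sup>2 * (real n)\<^sup>2)"
      using RC[OF that] Rp[OF that(1)] Cp[OF that(2)] c N by (intro divide_left_mono) auto
    finally show "norm_A n K i j \<le> 1 / (c\<^sup>2 * (real n)\<^sup>2)" .
  qed
  have Alow: "norm_A n K i j \<ge> K i j / (row_sum n K i * n)" if "i < n" "j < n" for i j
    unfolding norm_A_def using Kb[OF that] Rp[OF that(1)] Cp[OF that(2)] Cu[OF that(2)]
    by (intro divide_left_mono mult_left_mono) auto
  have Alow2: "norm_A n K i j \<ge> K i j / (n * col_sum n K j)" if "i < n" "j < n" for i j
    unfolding norm_A_def using Kb[OF that] Rp[OF that(1)] Cp[OF that(2)] Ru[OF that(1)]
    by (intro divide_left_mono mult_right_mono) auto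
  show al: "row_sum n (norm_A n K) i \<ge> 1 / n" if "i < n" for i
  proof -
    have "row_sum n (norm_A n K) i \<ge> (\<Sum>j<n. K i j / (row_sum n K i * n))"
      unfolding row_sum_def[of n "norm_A n K"] by (rule sum_mono) (use Alow that in auto)
    also have "(\<Sum>j<n. K i j / (row_sum n K i * n)) = row_sum n K i / (row_sum n K i * n)"
      unfolding row_sum_def by (simp add: sum_divide_distrib)
    also have "... = 1 / n" using Rp[OF that] by simp
    finally show ?thesis .
  qed
  have au: "row_sum n (norm_A n K) i \<le> 1 / (c\<^sup>2 * n)" if "i < n" for i
  proof -
    have "row_sum n (norm_A n K) i \<le> real (card {..<n}) * (1 / (c\<^sup>2 * (real n)\<^sup>2))"
      unfolding row_sum_def by (rule sum_bounded_above) (use Ab that in auto)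
    then show ?thesis using N by (simp add: power2_eq_square)
  qed
  have ap: "row_sum n (norm_A n K) i > 0" if "i < n" for i
    using al[OF that] divide_pos_pos[OF zero_less_one N] by linarith
  show "0 \<le> norm_Z n K i j \<and> norm_Z n K i j \<le> 1 / (c\<^sup>2 * n)" if "i < n" "j < n" for i j
  proof
    show "0 \<le> norm_Z n K i j" unfolding norm_Z_def using Ab[OF that] ap[OF that(1)] by simp
    have "norm_Z n K i j \<le> norm_A n K i j / (1 / n)"
      unfolding norm_Z_def using Ab[OF that] al[OF that(1)] ap[OF that(1)] N
      by (intro divide_left_mono) auto
    also have "... = norm_A n K i j * n" by simp
    also have "... \<le> 1 / (c\<^sup>2 * (real n)\<^sup>2) * n" using Ab[OF that] N by (intro mult_right_mono) auto
    also have "... = 1 / (c\<^sup>2 * n)" using N by (simp add: power2_eq_square)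
    finally show "norm_Z n K i j \<le> 1 / (c\<^sup>2 * n)" .
  qed
  show "col_sum n (norm_Z n K) j \<ge> c\<^sup>2" if "j < n" for j
  proof -
    have Zl: "norm_Z n K i j \<ge> norm_A n K i j * (c\<^sup>2 * n)" if "i < n" for i
    proof -
      have "norm_A n K i j * (c\<^sup>2 * n) = norm_A n K i j / (1 / (c\<^sup>2 * n))" by simp
      also have "... \<le> norm_Z n K i j" unfolding norm_Z_def
        using Ab[OF that \<open>j < n\<close>] au[OF that] ap[OF that] c N
        by (intro divide_left_mono) auto
      finally show ?thesis .
    qed
    have "col_sum n (norm_Z n K) j \<ge> (\<Sum>i<n. norm_A n K i j * (c\<^sup>2 * n))"
      unfolding col_sum_def by (rule sum_mono) (use Zl in auto)
    also have "(\<Sum>i<n. norm_A n K i j * (c\<^sup>2 * n)) = col_sum n (norm_A n K) j * (c\<^sup>2 * n)"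
      unfolding col_sum_def by (simp add: sum_distrib_right)
    finally have 1: "col_sum n (norm_A n K) j * (c\<^sup>2 * n) \<le> col_sum n (norm_Z n K) j" .
    have "col_sum n (norm_A n K) j \<ge> (\<Sum>i<n. K i j / (n * col_sum n K j))"
      unfolding col_sum_def[of n "norm_A n K"] by (rule sum_mono) (use Alow2 that in auto)
    also have "(\<Sum>i<n. K i j / (n * col_sum n K j)) = col_sum n K j / (n * col_sum n K j)"
      unfolding col_sum_def by (simp add: sum_divide_distrib)
    also have "... = 1 / n" using Cp[OF that] by simp
    finally have 2: "col_sum n (norm_A n K) j \<ge> 1 / n" .
    have "c\<^sup>2 = (1 / n) * (c\<^sup>2 * n)" using N by simp
    also have "... \<le> col_sum n (norm_A n K) j * (c\<^sup>2 * n)"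
      using 2 c N by (intro mult_right_mono) auto
    finally show ?thesis using 1 by linarith
  qed
qed

lemma hp2:
  fixes c t M :: real
  assumes "0 < c" "c \<le> 1" "a \<le> b" "0 \<le> t" "0 < M"
  shows "t / (c ^ a * M) \<le> t / (c ^ b * M)"
  using assms by (intro divide_left_mono mult_right_mono power_decreasing mult_pos_pos) auto

lemma pert_main:
  fixes K K' :: "nat \<Rightarrow> nat \<Rightarrow> real" and c \<delta> :: real
  assumes n: "n \<ge> 1" and c: "0 < c" "c \<le> 1"
    and Kb: "\<And>i j. i < n \<Longrightarrow> j < n \<Longrightarrow> 0 \<le> K i j \<and> K i j \<le> 1"
    and R: "\<And>i. i < n \<Longrightarrow> row_sum n K i \<ge> c * n"
    and C: "\<And>i. i < n \<Longrightarrow> col_sum n K i \<ge> c * n"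
    and Kb': "\<And>i j. i < n \<Longrightarrow> j < n \<Longrightarrow> 0 \<le> K' i j \<and> K' i j \<le> 1"
    and R': "\<And>i. i < n \<Longrightarrow> row_sum n K' i \<ge> c * n"
    and C': "\<And>i. i < n \<Longrightarrow> col_sum n K' i \<ge> c * n"
    and D: "\<And>i j. i < n \<Longrightarrow> j < n \<Longrightarrow> \<bar>K i j - K' i j\<bar> \<le> \<delta>"
    and ik: "i < n" "k < n"
  shows "\<bar>ZLZt n (norm_Z n K) i k - ZLZt n (norm_Z n K') i k\<bar> \<le> 18 * \<delta> / (c ^ 14 * n)"
proof -
  define N where "N = real n"
  have N: "N > 0" using n by (simp add: N_def)
  have d0: "\<delta> \<ge> 0" using D[of 0 0] n by force
  have B1: "\<And>i. i < n \<Longrightarrow> row_sum n K i \<le> n"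
    "\<And>j. j < n \<Longrightarrow> col_sum n K j \<le> n"
    "\<And>i j. i < n \<Longrightarrow> j < n \<Longrightarrow> 0 \<le> norm_A n K i j \<and> norm_A n K i j \<le> 1 / (c\<^sup>2 * (real n)\<^sup>2)"
    "\<And>i. i < n \<Longrightarrow> row_sum n (norm_A n K) i \<ge> 1 / n"
    "\<And>i j. i < n \<Longrightarrow> j < n \<Longrightarrow> 0 \<le> norm_Z n K i j \<and> norm_Z n K i j \<le> 1 / (c\<^sup>2 * n)"
    "\<And>j. j < n \<Longrightarrow> col_sum n (norm_Z n K) j \<ge> c\<^sup>2"
    "\<And>i j. i < n \<Longrightarrow> j < n \<Longrightarrow> c\<^sup>2 * (real n)\<^sup>2 \<le> row_sum n K i * col_sum n K j"
    by (rule mat_bounds[OF n c]; use Kb R C in auto)+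
  have B2: "\<And>i. i < n \<Longrightarrow> row_sum n K' i \<le> n"
    "\<And>j. j < n \<Longrightarrow> col_sum n K' j \<le> n"
    "\<And>i j. i < n \<Longrightarrow> j < n \<Longrightarrow> 0 \<le> norm_A n K' i j \<and> norm_A n K' i j \<le> 1 / (c\<^sup>2 * (real n)\<^sup>2)"
    "\<And>i. i < n \<Longrightarrow> row_sum n (norm_A n K') i \<ge> 1 / n"
    "\<And>i j. i < n \<Longrightarrow> j < n \<Longrightarrow> 0 \<le> norm_Z n K' i j \<and> norm_Z n K' i j \<le> 1 / (c\<^sup>2 * n)"
    "\<And>j. j < n \<Longrightarrow> col_sum n (norm_Z n K') j \<ge> c\<^sup>2"
    "\<And>i j. i < n \<Longrightarrow> j < n \<Longrightarrow> c\<^sup>2 * (real n)\<^sup>2 \<le> row_sum n K' i * col_sum n K' j"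
    by (rule mat_bounds[OF n c]; use Kb' R' C' in auto)+
  have dR: "\<bar>row_sum n K i - row_sum n K' i\<bar> \<le> N * \<delta>" if "i < n" for i
    unfolding row_sum_def N_def by (rule sum_pert) (use D that in auto)
  have dC: "\<bar>col_sum n K j - col_sum n K' j\<bar> \<le> N * \<delta>" if "j < n" for j
    unfolding col_sum_def N_def by (rule sum_pert) (use D that in auto)
  have dD: "\<bar>row_sum n K i * col_sum n K j - row_sum n K' i * col_sum n K' j\<bar> \<le> N * (N * \<delta>) + (N * \<delta>) * N"
    if "i < n" "j < n" for i j
  proof (rule mul_pert)
    show "\<bar>row_sum n K i\<bar> \<le> N" unfolding N_def abs_le_iff
      using B1(1)[OF that(1)] R[OF that(1)] mult_nonneg_nonneg[of c "real n"] c by linarith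
    show "\<bar>col_sum n K' j\<bar> \<le> N" unfolding N_def abs_le_iff
      using B2(2)[OF that(2)] C'[OF that(2)] mult_nonneg_nonneg[of c "real n"] c by linarith
  qed (use dR dC that in auto)
  have dA: "\<bar>norm_A n K i j - norm_A n K' i j\<bar> \<le> 3 * \<delta> / (c ^ 4 * N\<^sup>2)" if "i < n" "j < n" for i j
  proof -
    have "\<bar>norm_A n K i j - norm_A n K' i j\<bar> \<le> \<delta> / (c\<^sup>2 * N\<^sup>2) + 1 * (N * (N * \<delta>) + (N * \<delta>) * N) / (c\<^sup>2 * N\<^sup>2)\<^sup>2"
      unfolding norm_A_def
      by (rule div_pert) (use c N B1(7)[OF that] B2(7)[OF that] Kb[OF that] D[OF that] dD[OF that] in \<open>auto simp: N_def\<close>)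
    also have "... = \<delta> / (c ^ 2 * N\<^sup>2) + 2 * \<delta> / (c ^ 4 * N\<^sup>2)"
      using c N by (simp add: field_simps eval_nat_numeral)
    also have "... \<le> \<delta> / (c ^ 4 * N\<^sup>2) + 2 * \<delta> / (c ^ 4 * N\<^sup>2)"
      by (rule add_right_mono, rule hp2) (use c d0 N in auto)
    finally show ?thesis by (simp add: add_divide_distrib[symmetric])
  qed
  have da: "\<bar>row_sum n (norm_A n K) i - row_sum n (norm_A n K') i\<bar> \<le> 3 * \<delta> / (c ^ 4 * N)" if "i < n" for i
  proof -
    have "\<bar>row_sum n (norm_A n K) i - row_sum n (norm_A n K') i\<bar> \<le> N * (3 * \<delta> / (c ^ 4 * N\<^sup>2))"
      unfolding row_sum_def[of n "norm_A n K"] row_sum_def[of n "norm_A n K'"] N_def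
      by (rule sum_pert) (use dA that in \<open>auto simp: N_def\<close>)
    also have "... = 3 * \<delta> / (c ^ 4 * N)" using N by (simp add: power2_eq_square)
    finally show ?thesis .
  qed
  have dZ: "\<bar>norm_Z n K i j - norm_Z n K' i j\<bar> \<le> 6 * \<delta> / (c ^ 6 * N)" if "i < n" "j < n" for i j
  proof -
    have "\<bar>norm_Z n K i j - norm_Z n K' i j\<bar> \<le> (3 * \<delta> / (c ^ 4 * N\<^sup>2)) / (1 / N) + (1 / (c\<^sup>2 * N\<^sup>2)) * (3 * \<delta> / (c ^ 4 * N)) / (1 / N)\<^sup>2"
      unfolding norm_Z_def
      by (rule div_pert) (use c N B1(3)[OF that] B1(4)[OF that(1)] B2(4)[OF that(1)] dA[OF that] da[OF that(1)] in \<open>auto simp: N_def\<close>)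
    also have "... = 3 * \<delta> / (c ^ 4 * N) + 3 * \<delta> / (c ^ 6 * N)"
      using c N by (simp add: field_simps eval_nat_numeral)
    also have "... \<le> 3 * \<delta> / (c ^ 6 * N) + 3 * \<delta> / (c ^ 6 * N)"
      by (rule add_right_mono, rule hp2) (use c d0 N in auto)
    finally show ?thesis by (simp add: mult.commute)
  qed
  have dz: "\<bar>col_sum n (norm_Z n K) j - col_sum n (norm_Z n K') j\<bar> \<le> 6 * \<delta> / c ^ 6" if "j < n" for j
  proof -
    have "\<bar>col_sum n (norm_Z n K) j - col_sum n (norm_Z n K') j\<bar> \<le> N * (6 * \<delta> / (c ^ 6 * N))"
      unfolding col_sum_def[of n "norm_Z n K"] col_sum_def[of n "norm_Z n K'"] N_def
      by (rule sum_pert) (use dZ that in \<open>auto simp: N_def\<close>)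
    also have "... = 6 * \<delta> / c ^ 6" using N by simp
    finally show ?thesis .
  qed
  have dT: "\<bar>norm_Z n K i j * (1 / col_sum n (norm_Z n K) j) * norm_Z n K k j
      - norm_Z n K' i j * (1 / col_sum n (norm_Z n K') j) * norm_Z n K' k j\<bar> \<le> 18 * \<delta> / (c ^ 14 * N\<^sup>2)"
    if j: "j < n" for j
  proof -
    have dP: "\<bar>norm_Z n K i j * norm_Z n K k j - norm_Z n K' i j * norm_Z n K' k j\<bar>
        \<le> 1 / (c\<^sup>2 * N) * (6 * \<delta> / (c ^ 6 * N)) + (6 * \<delta> / (c ^ 6 * N)) * (1 / (c\<^sup>2 * N))"
      by (rule mul_pert) (use B1(5)[OF ik(1) j] B2(5)[OF ik(2) j] dZ[OF ik(1) j] dZ[OF ik(2) j] in \<open>auto simp: N_def\<close>)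
    have Pb0: "\<bar>norm_Z n K i j * norm_Z n K k j\<bar> \<le> 1 / (c\<^sup>2 * N) * (1 / (c\<^sup>2 * N))"
      unfolding abs_mult using B1(5)[OF ik(1) j] B1(5)[OF ik(2) j]
      by (intro mult_mono) (auto simp: N_def)
    have "1 / (c\<^sup>2 * N) * (1 / (c\<^sup>2 * N)) = 1 / (c ^ 4 * N\<^sup>2)"
      by (simp add: eval_nat_numeral)
    with Pb0 have Pb: "\<bar>norm_Z n K i j * norm_Z n K k j\<bar> \<le> 1 / (c ^ 4 * N\<^sup>2)" by simp
    have eq: "\<And>a b z. a * (1 / z) * b = (a * b) / (z::real)" by simp
    have "\<bar>norm_Z n K i j * (1 / col_sum n (norm_Z n K) j) * norm_Z n K k j
      - norm_Z n K' i j * (1 / col_sum n (norm_Z n K') j) * norm_Z n K' k j\<bar>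
      \<le> (1 / (c\<^sup>2 * N) * (6 * \<delta> / (c ^ 6 * N)) + (6 * \<delta> / (c ^ 6 * N)) * (1 / (c\<^sup>2 * N))) / c\<^sup>2
        + (1 / (c ^ 4 * N\<^sup>2)) * (6 * \<delta> / c ^ 6) / (c\<^sup>2)\<^sup>2"
      unfolding eq
      by (rule div_pert) (use c B1(6)[OF j] B2(6)[OF j] dP Pb dz[OF j] in auto)
    also have "... = 12 * \<delta> / (c ^ 10 * N\<^sup>2) + 6 * \<delta> / (c ^ 14 * N\<^sup>2)"
      using c N by (simp add: field_simps eval_nat_numeral)
    also have "... \<le> 12 * \<delta> / (c ^ 14 * N\<^sup>2) + 6 * \<delta> / (c ^ 14 * N\<^sup>2)"
      by (rule add_right_mono, rule hp2) (use c d0 N in auto)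
    finally show ?thesis by (simp add: mult.commute)
  qed
  have "\<bar>ZLZt n (norm_Z n K) i k - ZLZt n (norm_Z n K') i k\<bar> \<le> N * (18 * \<delta> / (c ^ 14 * N\<^sup>2))"
    unfolding ZLZt_def N_def by (rule sum_pert) (use dT in \<open>auto simp: N_def\<close>)
  also have "... = 18 * \<delta> / (c ^ 14 * n)" using N by (simp add: power2_eq_square N_def)
  finally show ?thesis .
qed



lemma L2_set_abs_eq: "L2_set (\<lambda>i. \<bar>f i\<bar>) A = L2_set f A"
  unfolding L2_set_def by simp

lemma spec_bound:
  fixes M :: "nat \<Rightarrow> nat \<Rightarrow> real"
  assumes n: "n \<ge> 1" and B: "\<And>i k. i < n \<Longrightarrow> k < n \<Longrightarrow> \<bar>M i k\<bar> \<le> m"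
  shows "spec_norm n M \<le> real n * m"
proof -
  have m0: "0 \<le> m" using B[of 0 0] n by force
  show ?thesis unfolding spec_norm_def
  proof (rule cSUP_least)
    show "{v :: nat \<Rightarrow> real. L2_set v {..<n} \<le> 1} \<noteq> {}"
    proof -
      have "(\<lambda>_. 0::real) \<in> {v :: nat \<Rightarrow> real. L2_set v {..<n} \<le> 1}" by (simp add: L2_set_def)
      then show ?thesis by blast
    qed
  next
    fix v :: "nat \<Rightarrow> real" assume "v \<in> {v. L2_set v {..<n} \<le> 1}"
    then have v: "L2_set v {..<n} \<le> 1" by simp
    have row: "\<bar>\<Sum>j<n. M i j * v j\<bar> \<le> m * sqrt n" if i: "i < n" for i
    proof -
      have "\<bar>\<Sum>j<n. M i j * v j\<bar> \<le> (\<Sum>j<n. \<bar>M i j * v j\<bar>)" by (rule sum_abs)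
      also have "... \<le> (\<Sum>j<n. m * (\<bar>1\<bar> * \<bar>v j\<bar>))"
        unfolding abs_mult by (rule sum_mono) (use B i in \<open>auto intro: mult_right_mono\<close>)
      also have "... = m * (\<Sum>j<n. \<bar>1\<bar> * \<bar>v j\<bar>)" by (simp add: sum_distrib_left)
      also have "... \<le> m * (L2_set (\<lambda>_. 1) {..<n} * L2_set v {..<n})"
        by (rule mult_left_mono[OF L2_set_mult_ineq m0])
      also have "... \<le> m * sqrt n"
        unfolding L2_set_constant using v m0
        by (intro mult_left_mono) (auto intro: mult_left_le)
      finally show ?thesis .
    qed
    have "L2_set (\<lambda>i. \<Sum>j<n. M i j * v j) {..<n} = L2_set (\<lambda>i. \<bar>\<Sum>j<n. M i j * v j\<bar>) {..<n}"
      by (simp add: L2_set_abs_eq)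
    also have "... \<le> L2_set (\<lambda>i. m * sqrt n) {..<n}"
      by (rule L2_set_mono) (use row in auto)
    also have "... = real n * m" unfolding L2_set_constant using m0
      by (simp add: abs_mult mult.commute[of m] mult.assoc[symmetric])
    finally show "L2_set (\<lambda>i. \<Sum>j<n. M i j * v j) {..<n} \<le> real n * m" .
  qed
qed


theorem lemma2:
  fixes x :: "nat \<Rightarrow> nat \<Rightarrow> 'a::euclidean_space"
    and u :: "nat \<Rightarrow> nat \<Rightarrow> 'a"
    and s :: "nat \<Rightarrow> nat"
    and \<tau> :: "nat \<Rightarrow> nat \<Rightarrow> nat"
    and \<epsilon> :: real
    and \<eta>1 :: "nat \<Rightarrow> real"
    and c1 :: real
  assumes eps_pos: "\<epsilon> > 0"
    and eta1_pos: "\<And>n. n \<ge> 1 \<Longrightarrow> \<eta>1 n > 0"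
    and induced: "\<And>n j. n \<ge> 1 \<Longrightarrow> j < s n \<Longrightarrow> \<exists>i<n. u n j = x n i"
    and tau_range: "\<And>n i. n \<ge> 1 \<Longrightarrow> i < n \<Longrightarrow> \<tau> n i < s n"
    and tau_nearest: "\<And>n i j. n \<ge> 1 \<Longrightarrow> i < n \<Longrightarrow> j < s n \<Longrightarrow>
         norm (x n i - u n (\<tau> n i)) \<le> norm (x n i - u n j)"
    and c1: "0 < c1" "c1 < 1"
    and Kbar_row: "\<And>n i. n \<ge> 1 \<Longrightarrow> i < n \<Longrightarrow>
         row_sum n (\<lambda>i j. gauss_kernel \<epsilon> (x n i) (x n j)) i \<ge> c1 * real n"
    and Kbar_col: "\<And>n i. n \<ge> 1 \<Longrightarrow> i < n \<Longrightarrow>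
         col_sum n (\<lambda>i j. gauss_kernel \<epsilon> (x n i) (x n j)) i \<ge> c1 * real n"
    and Ktil_row: "\<And>n i. n \<ge> 1 \<Longrightarrow> i < n \<Longrightarrow>
         row_sum n (\<lambda>i j. trunc_kernel \<epsilon> (\<eta>1 n) (x n i) (u n (\<tau> n j))) i \<ge> c1 * real n"
    and Ktil_col: "\<And>n i. n \<ge> 1 \<Longrightarrow> i < n \<Longrightarrow>
         col_sum n (\<lambda>i j. trunc_kernel \<epsilon> (\<eta>1 n) (x n i) (u n (\<tau> n j))) i \<ge> c1 * real n"
  shows "\<exists>C1. \<forall>n\<ge>1.
    spec_norm n (\<lambda>i k.
        ZLZt n (norm_Z n (\<lambda>i j. gauss_kernel \<epsilon> (x n i) (x n j))) i k
      - ZLZt n (norm_Z n (\<lambda>i j. trunc_kernel \<epsilon> (\<eta>1 n) (x n i) (u n (\<tau> n j)))) i k)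
    \<le> C1 * (exp (- (\<eta>1 n)\<^sup>2 / (4 * \<epsilon>\<^sup>2))
             + Max ((\<lambda>i. norm (x n i - u n (\<tau> n i))) ` {..<n}) / \<epsilon>)"
  proof -
  have c1le: "c1 \<le> 1" using c1 by simp
  have "\<forall>n\<ge>1.
    spec_norm n (\<lambda>i k.
        ZLZt n (norm_Z n (\<lambda>i j. gauss_kernel \<epsilon> (x n i) (x n j))) i k
      - ZLZt n (norm_Z n (\<lambda>i j. trunc_kernel \<epsilon> (\<eta>1 n) (x n i) (u n (\<tau> n j)))) i k)
    \<le> (18 / c1 ^ 14) * (exp (- (\<eta>1 n)\<^sup>2 / (4 * \<epsilon>\<^sup>2))
             + Max ((\<lambda>i. norm (x n i - u n (\<tau> n i))) ` {..<n}) / \<epsilon>)"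
  proof (intro allI impI)
    fix n :: nat assume n: "n \<ge> 1"
    define \<eta>2 where "\<eta>2 = Max ((\<lambda>i. norm (x n i - u n (\<tau> n i))) ` {..<n})"
    define \<delta> where "\<delta> = exp (- (\<eta>1 n)\<^sup>2 / (4 * \<epsilon>\<^sup>2)) + \<eta>2 / \<epsilon>"
    have dist: "norm (x n j - u n (\<tau> n j)) \<le> \<eta>2" if "j < n" for j
      unfolding \<eta>2_def using that by (intro Max_ge) auto
    have D: "\<bar>gauss_kernel \<epsilon> (x n i) (x n j) - trunc_kernel \<epsilon> (\<eta>1 n) (x n i) (u n (\<tau> n j))\<bar> \<le> \<delta>"
      if "i < n" "j < n" for i j
      unfolding \<delta>_def by (rule kernel_diff[OF eps_pos eta1_pos[OF n] dist[OF that(2)]])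
    have P: "\<bar>ZLZt n (norm_Z n (\<lambda>i j. gauss_kernel \<epsilon> (x n i) (x n j))) i k
      - ZLZt n (norm_Z n (\<lambda>i j. trunc_kernel \<epsilon> (\<eta>1 n) (x n i) (u n (\<tau> n j)))) i k\<bar>
      \<le> 18 * \<delta> / (c1 ^ 14 * n)" if "i < n" "k < n" for i k
    proof -
      have Kb1: "0 \<le> gauss_kernel \<epsilon> (x n i) (x n j) \<and> gauss_kernel \<epsilon> (x n i) (x n j) \<le> 1"
        if "i < n" "j < n" for i j using gauss_bounds by blast
      have Kb2: "0 \<le> trunc_kernel \<epsilon> (\<eta>1 n) (x n i) (u n (\<tau> n j)) \<and> trunc_kernel \<epsilon> (\<eta>1 n) (x n i) (u n (\<tau> n j)) \<le> 1"
        if "i < n" "j < n" for i j using trunc_bounds by blast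
      show ?thesis
        by (rule pert_main[OF n c1(1) c1le];
            (rule Kb1 Kb2 Kbar_row[OF n] Kbar_col[OF n] Ktil_row[OF n] Ktil_col[OF n] D that; assumption))
    qed
    have "spec_norm n (\<lambda>i k.
        ZLZt n (norm_Z n (\<lambda>i j. gauss_kernel \<epsilon> (x n i) (x n j))) i k
      - ZLZt n (norm_Z n (\<lambda>i j. trunc_kernel \<epsilon> (\<eta>1 n) (x n i) (u n (\<tau> n j)))) i k)
      \<le> real n * (18 * \<delta> / (c1 ^ 14 * n))"
      by (rule spec_bound[OF n]) (rule P; assumption)
    also have "... = (18 / c1 ^ 14) * \<delta>" using n by simp
    finally show "spec_norm n (\<lambda>i k.
        ZLZt n (norm_Z n (\<lambda>i j. gauss_kernel \<epsilon> (x n i) (x n j))) i k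
      - ZLZt n (norm_Z n (\<lambda>i j. trunc_kernel \<epsilon> (\<eta>1 n) (x n i) (u n (\<tau> n j)))) i k)
    \<le> (18 / c1 ^ 14) * (exp (- (\<eta>1 n)\<^sup>2 / (4 * \<epsilon>\<^sup>2))
             + Max ((\<lambda>i. norm (x n i - u n (\<tau> n i))) ` {..<n}) / \<epsilon>)"
      unfolding \<delta>_def \<eta>2_def .
  qed
  then show ?thesis by (intro exI[where x="18 / c1 ^ 14"])
qed

end
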